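(* Let $q$ be a prime power and let $s,t$ be non-negative integers with $s+t>0$ and $t<q$. Put $n=s(q+1)+t+1$. Then the $[n,2,sq+t;(q-1)(t+1)]_q$ linear code is AFER-optimal; that is, there exists an $[n,2,sq+t]_q$ linear code having exactly $(q-1)(t+1)$ codewords of weight $sq+t$, the largest minimum distance of an $[n,2]_q$ linear code is $d(n,2,q)=sq+t$, and every $[n,2,sq+t]_q$ linear code has at least $(q-1)(t+1)$ codewords of weight $sq+t$, i.e. $e(n,2,q)=(q-1)(t+1)$.
   Context: An $[n,k]_q$ linear code is a $k$-dimensional subspace of $\mathbb{F}_q^n$; the weight of a vector is its number of nonzero coordinates; an $[n,k,d]_q$ code is one with minimum nonzero weight $d$, and $A_d(C)$ (the error coefficient) is the number of codewords of weight $d$. $d(n,k,q)$ denotes the largest minimum distance of an $[n,k]_q$ linear code, and $e(n,k,q)$ the smallest value of $A_{d(n,k,q)}(C)$ over all $[n,k,d(n,k,q)]_q$ linear codes $C$. An $[n,k,d]_q$ code $C$ is AFER-optimal if $d=d(n,k,q)$ and $A_d(C)=e(n,k,q)$. *)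

theory Defs
  imports Complex_Main "HOL-Library.Function_Algebras"
begin

text \<open>Vectors of F_q^n are modelled as functions nat => 'a vanishing outside {0..<n}.
  The field F_q is a type 'a of class field and finite, with q = CARD('a).\<close>

definition fvec :: "nat \<Rightarrow> (nat \<Rightarrow> 'a::zero) set" where
  "fvec n = {v. \<forall>i\<ge>n. v i = 0}"

definition fscale :: "'a::times \<Rightarrow> (nat \<Rightarrow> 'a) \<Rightarrow> (nat \<Rightarrow> 'a)" where
  "fscale c v = (\<lambda>i. c * v i)"

definition hweight :: "nat \<Rightarrow> (nat \<Rightarrow> 'a::zero) \<Rightarrow> nat" where
  "hweight n v = card {i. i < n \<and> v i \<noteq> 0}"

definition linear_code :: "nat \<Rightarrow> nat \<Rightarrow> (nat \<Rightarrow> 'a::field) set \<Rightarrow> bool" where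
  "linear_code n k C \<longleftrightarrow> C \<subseteq> fvec n \<and> module.subspace fscale C
     \<and> vector_space.dim fscale C = k"

definition has_min_dist :: "nat \<Rightarrow> (nat \<Rightarrow> 'a::zero) set \<Rightarrow> nat \<Rightarrow> bool" where
  "has_min_dist n C d \<longleftrightarrow> (\<exists>v\<in>C. v \<noteq> 0 \<and> hweight n v = d)
     \<and> (\<forall>v\<in>C. v \<noteq> 0 \<longrightarrow> d \<le> hweight n v)"

definition num_weight :: "nat \<Rightarrow> (nat \<Rightarrow> 'a::zero) set \<Rightarrow> nat \<Rightarrow> nat" where
  "num_weight n C d = card {v\<in>C. hweight n v = d}"

end

theory Submission imports Defs begin

interpretation fv: vector_space "fscale :: 'a::field \<Rightarrow> (nat \<Rightarrow> 'a) \<Rightarrow> (nat \<Rightarrow> 'a)"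
  by unfold_locales (auto simp: fscale_def fun_eq_iff algebra_simps)

lemma fscale_app[simp]: "fscale c v i = c * v i"
  by (simp add: fscale_def)

lemma code_structure:
  fixes C :: "(nat \<Rightarrow> 'a::field) set"
  assumes "linear_code n 2 C"
  obtains u v where "C = range (\<lambda>(a,b). fscale a u + fscale b v)"
    "\<And>a b. fscale a u + fscale b v = 0 \<Longrightarrow> a = 0 \<and> b = 0"
proof -
  have sub: "fv.subspace C" and dim: "fv.dim C = 2" using assms by (auto simp: linear_code_def)
  obtain B where B: "B \<subseteq> C" "fv.independent B" "C \<subseteq> fv.span B" "card B = fv.dim C"
    using fv.basis_exists by blast
  have CB: "C = fv.span B" using B sub by (metis fv.span_eq_iff fv.span_minimal subset_antisym)
  obtain u v where uv: "B = {u, v}" "u \<noteq> v" using B(4) dim by (metis card_2_iff)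
  have v0: "v \<noteq> 0" and unot: "u \<notin> fv.span {v}" using B(2) uv
    by (auto simp: fv.independent_insert)
  have ind: "a = 0 \<and> b = 0" if h: "fscale a u + fscale b v = 0" for a b
  proof (cases "a = 0")
    case True then show ?thesis using h v0 by simp
  next
    case False
    have "u = fscale (- b / a) v"
      using h False by (auto simp: fun_eq_iff field_simps add_eq_0_iff)
    then have "u \<in> fv.span {v}" unfolding fv.span_singleton by (metis rangeI)
    then show ?thesis using unot by simp
  qed
  have "C = range (\<lambda>(a,b). fscale a u + fscale b v)"
    unfolding CB uv fv.span_insert fv.span_singleton
    by (auto simp: algebra_simps)
  then show ?thesis using that ind by blast
qed

lemma pair_count:
  fixes x y :: "'a::{field,finite}"
  shows "card {p::'a\<times>'a. fst p * x + snd p * y \<noteq> 0} \<le> card (UNIV::'a set) * (card (UNIV::'a set) - 1)"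
proof (cases "x = 0 \<and> y = 0")
  case True then show ?thesis by simp
next
  case False
  let ?Z = "{p::'a\<times>'a. fst p * x + snd p * y = 0}"
  have "card ?Z = card (UNIV::'a set)"
  proof (cases "x = 0")
    case True
    then have y: "y \<noteq> 0" using False by simp
    have "?Z = (\<lambda>a. (a, - (a * x) / y)) ` UNIV" using y
      by (auto simp: field_simps add_eq_0_iff image_iff)
    moreover have "inj (\<lambda>a::'a. (a, - (a * x) / y))" by (auto intro: injI)
    ultimately show ?thesis by (simp add: card_image)
  next
    case x: False
    have "?Z = (\<lambda>b. (- (b * y) / x, b)) ` UNIV" using x
      by (auto simp: field_simps add_eq_0_iff image_iff)
    moreover have "inj (\<lambda>b::'a. (- (b * y) / x, b))" by (auto intro: injI)
    ultimately show ?thesis by (simp add: card_image)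
  qed
  moreover have "{p::'a\<times>'a. fst p * x + snd p * y \<noteq> 0} = UNIV - ?Z" by auto
  moreover have "card (UNIV::('a\<times>'a) set) = card (UNIV::'a set) * card (UNIV::'a set)"
    by (simp flip: UNIV_Times_UNIV add: card_cartesian_product)
  ultimately have "card {p::'a\<times>'a. fst p * x + snd p * y \<noteq> 0} = card (UNIV::'a set) * card (UNIV::'a set) - card (UNIV::'a set)"
    by (simp add: card_Diff_subset)
  then show ?thesis by (simp add: algebra_simps diff_mult_distrib2)
qed

lemma sum_weights:
  fixes u v :: "nat \<Rightarrow> 'a::{field,finite}"
  shows "(\<Sum>p\<in>UNIV. hweight n (fscale (fst p) u + fscale (snd p) v)) \<le> n * (card (UNIV::'a set) * (card (UNIV::'a set) - 1))"
proof -
  have "(\<Sum>p\<in>UNIV. hweight n (fscale (fst p) u + fscale (snd p) v))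
     = (\<Sum>p\<in>UNIV. \<Sum>i<n. if fst p * u i + snd p * v i \<noteq> 0 then 1 else 0)"
    unfolding hweight_def
    by (intro sum.cong refl) (simp add: sum.If_cases lessThan_def Collect_conj_eq Int_commute)
  also have "\<dots> = (\<Sum>i<n. \<Sum>p\<in>UNIV. if fst p * u i + snd p * v i \<noteq> 0 then 1 else 0)"
    by (rule sum.swap)
  also have "\<dots> = (\<Sum>i<n. card {p::'a\<times>'a. fst p * u i + snd p * v i \<noteq> 0})"
    by (simp add: sum.If_cases)
  also have "\<dots> \<le> (\<Sum>i<n. card (UNIV::'a set) * (card (UNIV::'a set) - 1))"
    by (intro sum_mono pair_count)
  finally show ?thesis by simp
qed

lemma key_identity:
  fixes q s t :: nat
  assumes "q \<ge> 1"
  shows "(s*q+t+1)*(q*q-1) = (s*(q+1)+t+1)*(q*(q-1)) + (q-1)*(t+1)"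
proof -
  obtain r where q: "q = Suc r" using assms by (cases q) auto
  show ?thesis unfolding q by (simp add: algebra_simps)
qed

lemma card_field_ge2: "card (UNIV::'a::{field,finite} set) \<ge> 2"
proof -
  have "card {0::'a, 1} = 2" by simp
  moreover have "card {0::'a, 1} \<le> card (UNIV::'a set)" by (rule card_mono) auto
  ultimately show ?thesis by simp
qed

lemma gen_bounds:
  fixes C :: "(nat \<Rightarrow> 'a::{field,finite}) set"
  assumes lc: "linear_code n 2 C" and md: "has_min_dist n C d"
    and qd: "q = card (UNIV :: 'a set)" and nd: "n = s * (q + 1) + t + 1"
  shows "d \<le> s * q + t" and "d = s * q + t \<Longrightarrow> (q - 1) * (t + 1) \<le> num_weight n C d"
proof -
  obtain u v where C: "C = range (\<lambda>(a,b). fscale a u + fscale b v)"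
    and ind: "\<And>a b. fscale a u + fscale b v = 0 \<Longrightarrow> a = 0 \<and> b = 0"
    using code_structure[OF lc] by blast
  define g where "g = (\<lambda>p::'a\<times>'a. fscale (fst p) u + fscale (snd p) v)"
  define W where "W = (\<lambda>p. hweight n (g p))"
  have Cg: "C = range g" unfolding C g_def by (auto simp: case_prod_beta)
  have g0: "g p \<noteq> 0" if "p \<noteq> (0,0)" for p
    using ind[of "fst p" "snd p"] that by (auto simp: g_def prod_eq_iff)
  have injg: "inj g"
  proof (rule injI)
    fix p p' assume "g p = g p'"
    then have "fscale (fst p - fst p') u + fscale (snd p - snd p') v = 0"
      by (auto simp: g_def fun_eq_iff algebra_simps)
    then show "p = p'" using ind by (metis prod_eq_iff right_minus_eq)
  qed
  have W0: "W (0,0) = 0" by (simp add: W_def g_def hweight_def)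
  have dle: "d \<le> W p" if "p \<noteq> (0,0)" for p
    using md g0[OF that] unfolding has_min_dist_def W_def Cg by (metis rangeI)
  have nw: "num_weight n C d = card {p. W p = d}"
  proof -
    have "{v\<in>C. hweight n v = d} = g ` {p. W p = d}" unfolding Cg W_def by auto
    then show ?thesis unfolding num_weight_def using injg
      by (simp add: card_image inj_on_subset)
  qed
  have q2: "q \<ge> 2" using card_field_ge2 qd by simp
  have S: "(\<Sum>p\<in>UNIV. W p) \<le> n * (q * (q - 1))"
    using sum_weights[of n u v] unfolding W_def g_def qd by simp
  have SU: "(\<Sum>p\<in>UNIV. W p) = (\<Sum>p\<in>UNIV - {(0::'a,0::'a)}. W p)"
    using W0 by (simp add: sum.remove[of UNIV "(0,0)"])
  have cU: "card (UNIV::('a\<times>'a) set) = q * q"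
    by (simp add: qd flip: UNIV_Times_UNIV add: card_cartesian_product)
  have cU2: "card (UNIV - {(0::'a,0::'a)}) = q * q - 1"
    using cU by (metis card_Diff_singleton UNIV_I finite)
  have ki: "(s*q+t+1)*(q*q-1) = n*(q*(q-1)) + (q-1)*(t+1)"
    using key_identity[of q s t] q2 nd by simp
  have A: "d * (q*q-1) \<le> n * (q * (q - 1))"
  proof -
    have "d * (q*q-1) = (\<Sum>p\<in>UNIV - {(0::'a,0::'a)}. d)" by (simp only: sum_constant cU2 of_nat_id mult.commute)
    also have "\<dots> \<le> (\<Sum>p\<in>UNIV - {(0::'a,0::'a)}. W p)" by (intro sum_mono dle) auto
    finally show ?thesis using S SU by simp
  qed
  show "d \<le> s * q + t"
  proof (rule ccontr)
    assume "\<not> d \<le> s * q + t"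
    then have "s*q+t+1 \<le> d" by simp
    then have "(s*q+t+1)*(q*q-1) \<le> d * (q*q-1)" by (rule mult_right_mono) simp
    moreover have "0 < (q-1)*(t+1)" using q2 by simp
    ultimately show False using A ki by linarith
  qed
  assume dd: "d = s * q + t"
  have "(s*q+t+1)*(q*q-1) = (\<Sum>p\<in>UNIV - {(0::'a,0::'a)}. d + 1)" unfolding dd by (simp only: sum_constant cU2 of_nat_id mult.commute)
  also have "\<dots> \<le> (\<Sum>p\<in>UNIV - {(0::'a,0::'a)}. W p + (if W p = d then 1 else 0))"
  proof (rule sum_mono)
    fix p assume "p \<in> UNIV - {(0::'a,0::'a)}"
    then have "d \<le> W p" using dle by auto
    then show "d + 1 \<le> W p + (if W p = d then 1 else 0)" by auto
  qed
  also have "\<dots> \<le> (\<Sum>p\<in>UNIV. W p + (if W p = d then 1 else 0))"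
    by (rule sum_mono2) auto
  also have "\<dots> = (\<Sum>p\<in>UNIV. W p) + card {p. W p = d}"
    by (simp add: sum.distrib sum.If_cases)
  finally show "(q - 1) * (t + 1) \<le> num_weight n C d" using S ki nw by linarith
qed

lemma block_count:
  fixes m :: nat
  assumes "m > 0"
  shows "card {i. i < s*m \<and> P (i mod m)} = s * card {k. k < m \<and> P k}"
proof (induction s)
  case 0 then show ?case by simp
next
  case (Suc s)
  have eq: "{i. i < Suc s * m \<and> P (i mod m)} = {i. i < s*m \<and> P (i mod m)} \<union> (\<lambda>k. s*m + k) ` {k. k < m \<and> P k}"
  proof (intro set_eqI iffI)
    fix i assume i: "i \<in> {i. i < Suc s * m \<and> P (i mod m)}"
    show "i \<in> {i. i < s*m \<and> P (i mod m)} \<union> (\<lambda>k. s*m + k) ` {k. k < m \<and> P k}"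
    proof (cases "i < s*m")
      case True then show ?thesis using i by auto
    next
      case False
      then obtain k where k: "i = s*m + k" by (metis le_iff_add not_less)
      then have "k < m" using i by simp
      then have "i mod m = k" using k by simp
      then show ?thesis using i k \<open>k < m\<close> by auto
    qed
  next
    fix i assume "i \<in> {i. i < s*m \<and> P (i mod m)} \<union> (\<lambda>k. s*m + k) ` {k. k < m \<and> P k}"
    then show "i \<in> {i. i < Suc s * m \<and> P (i mod m)}" by auto
  qed
  have "card {i. i < Suc s * m \<and> P (i mod m)} = card {i. i < s*m \<and> P (i mod m)} + card ((\<lambda>k. s*m + k) ` {k. k < m \<and> P k})"
    unfolding eq by (rule card_Un_disjoint) auto
  also have "card ((\<lambda>k. s*m + k) ` {k. k < m \<and> P k}) = card {k. k < m \<and> P k}"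
    by (rule card_image) (auto intro: inj_onI)
  finally show ?case using Suc by simp
qed


lemma construction:
  fixes s t n q :: nat
  assumes qd: "q = card (UNIV :: 'a::{field,finite} set)"
    and st: "s + t > 0" and tq: "t < q"
    and nd: "n = s * (q + 1) + t + 1"
  shows "\<exists>C :: (nat \<Rightarrow> 'a) set. linear_code n 2 C \<and> has_min_dist n C (s * q + t)
            \<and> num_weight n C (s * q + t) = (q - 1) * (t + 1)"
proof -
  have q2: "q \<ge> 2" using card_field_ge2 qd by simp
  obtain e :: "nat \<Rightarrow> 'a" where e: "bij_betw e {..<q} UNIV"
    using ex_bij_betw_nat_finite[of "UNIV::'a set"] qd by (auto simp: atLeast0LessThan)
  have einj: "e j = e j' \<longleftrightarrow> j = j'" if "j < q" "j' < q" for j j'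
    using e that by (auto simp: bij_betw_def inj_on_def)
  have esurj: "\<exists>k<q. e k = c" for c
    using e by (metis bij_betw_imp_surj_on imageE lessThan_iff UNIV_I)
  define m where "m = q + 1"
  have m0: "m > 0" by (simp add: m_def)
  define cx :: "nat \<Rightarrow> 'a" where "cx k = (if k < q then 1 else 0)" for k
  define cy :: "nat \<Rightarrow> 'a" where "cy k = (if k < q then e k else 1)" for k
  define idx where "idx i = (if i < s*m then i mod m else i - s*m)" for i
  define u :: "nat \<Rightarrow> 'a" where "u i = (if i < n then cx (idx i) else 0)" for i
  define v :: "nat \<Rightarrow> 'a" where "v i = (if i < n then cy (idx i) else 0)" for i
  define g where "g a b = fscale a u + fscale b v" for a b
  define Z where "Z a b k \<longleftrightarrow> a * cx k + b * cy k = 0" for a b k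
  define E where "E a b \<longleftrightarrow> b \<noteq> 0 \<and> (\<exists>j\<le>t. a + b * e j = 0)" for a b
  have c1: "card {k. k < m \<and> Z a b k} = 1" if ab: "(a,b) \<noteq> (0,0)" for a b
  proof (cases "b = 0")
    case True
    then have "a \<noteq> 0" using ab by simp
    then have "{k. k < m \<and> Z a b k} = {q}" using True by (auto simp: m_def Z_def cx_def)
    then show ?thesis by simp
  next
    case False
    obtain k0 where k0: "k0 < q" "e k0 = - a / b" using esurj by blast
    have "{k. k < m \<and> Z a b k} = {k0}"
    proof (intro set_eqI iffI)
      fix k assume "k \<in> {k. k < m \<and> Z a b k}"
      then have k: "k < m" "a * cx k + b * cy k = 0" by (auto simp: Z_def)
      have "k < q" using k False by (auto simp: m_def cx_def cy_def split: if_splits)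
      then have "e k = - a / b" using k False by (simp add: cx_def cy_def field_simps add_eq_0_iff)
      then show "k \<in> {k0}" using k0 einj[of k k0] \<open>k < q\<close> by simp
    next
      fix k assume "k \<in> {k0}"
      then show "k \<in> {k. k < m \<and> Z a b k}" using k0 False by (simp add: m_def Z_def cx_def cy_def)
    qed
    then show ?thesis by simp
  qed
  have c2: "card {j. j \<le> t \<and> Z a b j} = (if E a b then 1 else 0)" if ab: "(a,b) \<noteq> (0,0)" for a b
  proof (cases "b = 0")
    case True
    then have "a \<noteq> 0" using ab by simp
    then have "{j. j \<le> t \<and> Z a b j} = {}" using True tq by (auto simp: Z_def cx_def)
    then show ?thesis using True by (simp add: E_def)
  next
    case False
    obtain k0 where k0: "k0 < q" "e k0 = - a / b" using esurj by blast
    have Zj: "Z a b j \<longleftrightarrow> j = k0" if "j \<le> t" for j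
    proof -
      have jq: "j < q" using that tq by simp
      have "Z a b j \<longleftrightarrow> a + b * e j = 0" using jq by (simp add: Z_def cx_def cy_def)
      also have "\<dots> \<longleftrightarrow> e j = - a / b" using False
        by (metis add_eq_0_iff nonzero_divide_eq_eq nonzero_mult_div_cancel_left)
      finally show ?thesis using k0 einj[of j k0] jq by simp
    qed
    have Eab: "E a b \<longleftrightarrow> k0 \<le> t"
    proof
      assume "E a b"
      then obtain j where j: "j \<le> t" "a + b * e j = 0" by (auto simp: E_def)
      then have "Z a b j" using tq by (simp add: Z_def cx_def cy_def)
      then show "k0 \<le> t" using Zj j by auto
    next
      assume "k0 \<le> t"
      then have "Z a b k0" using Zj by simp
      then show "E a b" using False \<open>k0 \<le> t\<close> k0 tq by (auto simp: E_def Z_def cx_def cy_def)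
    qed
    have "{j. j \<le> t \<and> Z a b j} = (if k0 \<le> t then {k0} else {})" using Zj by auto
    then show ?thesis using Eab by simp
  qed
  have gapp: "g a b i = (if i < n then a * cx (idx i) + b * cy (idx i) else 0)" for a b i
    by (simp add: g_def u_def v_def)
  have W: "hweight n (g a b) = s*q + t + 1 - (if E a b then 1 else 0)" if ab: "(a,b) \<noteq> (0,0)" for a b
  proof -
    define Zs where "Zs = {i. i < n \<and> g a b i = 0}"
    have Zs_eq: "Zs = {i. i < s*m \<and> Z a b (i mod m)} \<union> (\<lambda>j. s*m + j) ` {j. j \<le> t \<and> Z a b j}"
    proof (intro set_eqI iffI)
      fix i assume "i \<in> Zs"
      then have i: "i < n" "a * cx (idx i) + b * cy (idx i) = 0" by (auto simp: Zs_def gapp)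
      show "i \<in> {i. i < s*m \<and> Z a b (i mod m)} \<union> (\<lambda>j. s*m + j) ` {j. j \<le> t \<and> Z a b j}"
      proof (cases "i < s*m")
        case True then show ?thesis using i by (auto simp: idx_def Z_def)
      next
        case False
        then obtain j where j: "i = s*m + j" by (metis le_iff_add not_less)
        then have "j \<le> t" using i nd by (simp add: m_def)
        then show ?thesis using i j by (auto simp: idx_def Z_def)
      qed
    next
      fix i assume "i \<in> {i. i < s*m \<and> Z a b (i mod m)} \<union> (\<lambda>j. s*m + j) ` {j. j \<le> t \<and> Z a b j}"
      then show "i \<in> Zs" using nd by (auto simp: Zs_def gapp idx_def Z_def m_def)
    qed
    have "card Zs = card {i. i < s*m \<and> Z a b (i mod m)} + card ((\<lambda>j. s*m + j) ` {j. j \<le> t \<and> Z a b j})"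
      unfolding Zs_eq by (rule card_Un_disjoint) auto
    also have "card ((\<lambda>j. s*m + j) ` {j. j \<le> t \<and> Z a b j}) = card {j. j \<le> t \<and> Z a b j}"
      by (rule card_image) (auto intro: inj_onI)
    also have "card {i. i < s*m \<and> Z a b (i mod m)} = s"
      using block_count[OF m0, of s "Z a b"] c1[OF ab] by simp
    finally have cZ: "card Zs = s + (if E a b then 1 else 0)" using c2[OF ab] by simp
    have "{i. i < n \<and> g a b i \<noteq> 0} = {..<n} - Zs" by (auto simp: Zs_def)
    then have "hweight n (g a b) = n - card Zs"
    proof -
      have "Zs \<subseteq> {..<n}" by (auto simp: Zs_def)
      moreover have "finite Zs" by (auto simp: Zs_def)
      ultimately show ?thesis unfolding hweight_def \<open>{i. i < n \<and> g a b i \<noteq> 0} = {..<n} - Zs\<close>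
        by (simp add: card_Diff_subset)
    qed
    then show ?thesis using cZ nd by (simp add: algebra_simps)
  qed
  have pos: "s*q + t \<ge> 1"
  proof (cases "s = 0")
    case True then show ?thesis using st by simp
  next
    case False then have "0 < s*q" using q2 by simp
    then show ?thesis by linarith
  qed
  have gnz: "g a b \<noteq> 0" if "(a,b) \<noteq> (0,0)" for a b
  proof
    assume "g a b = 0"
    then have "hweight n (g a b) = 0" by (simp add: hweight_def)
    then show False using W[OF that] pos by (simp split: if_splits)
  qed
  have ind: "a = 0 \<and> b = 0" if "fscale a u + fscale b v = 0" for a b
    using gnz[of a b] that by (auto simp: g_def)
  have v0: "v \<noteq> 0" using ind[of 0 1] by auto
  have uv: "u \<noteq> v" using ind[of 1 "-1"] by (auto simp: fun_eq_iff)
  have unot: "u \<notin> fv.span {v}"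
  proof
    assume "u \<in> fv.span {v}"
    then obtain k where "u = fscale k v" by (auto simp: fv.span_singleton)
    then have "fscale 1 u + fscale (-k) v = 0" by (simp add: fun_eq_iff fscale_def)
    then show False using ind[of 1 "-k"] by simp
  qed
  have indep: "fv.independent {u, v}"
    using v0 uv unot by (simp add: fv.independent_insert)
  define C where "C = fv.span {u, v}"
  have Cg: "C = range (\<lambda>(a,b). g a b)"
    unfolding C_def fv.span_insert fv.span_singleton g_def
    by (auto simp: algebra_simps)
  have lc: "linear_code n 2 C"
    unfolding linear_code_def
  proof (intro conjI)
    show "C \<subseteq> fvec n" unfolding Cg by (auto simp: fvec_def gapp)
    show "module.subspace fscale C" unfolding C_def by (rule fv.subspace_span)
    show "vector_space.dim fscale C = 2"
      unfolding C_def fv.dim_span_eq_card_independent[OF indep] using uv by simp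
  qed
  have Wge: "s*q + t \<le> hweight n x" if "x \<in> C" "x \<noteq> 0" for x
  proof -
    obtain a b where x: "x = g a b" using \<open>x \<in> C\<close> Cg by auto
    then have "(a,b) \<noteq> (0,0)" using that by (auto simp: g_def)
    then show ?thesis using W x by simp
  qed
  have Eex: "E (- e 0) 1" using tq by (auto simp: E_def)
  have md: "has_min_dist n C (s*q + t)"
    unfolding has_min_dist_def
  proof (intro conjI ballI impI)
    show "\<exists>x\<in>C. x \<noteq> 0 \<and> hweight n x = s * q + t"
    proof (intro bexI conjI)
      show "g (- e 0) 1 \<noteq> 0" by (rule gnz) simp
      show "hweight n (g (- e 0) 1) = s * q + t" using W[of "- e 0" 1] Eex by simp
      show "g (- e 0) 1 \<in> C" using Cg by auto
    qed
  qed (rule Wge)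
  have injg: "inj (\<lambda>(a,b). g a b)"
  proof (rule injI)
    fix p p' assume "(case p of (a,b) \<Rightarrow> g a b) = (case p' of (a,b) \<Rightarrow> g a b)"
    then have "fscale (fst p - fst p') u + fscale (snd p - snd p') v = 0"
      by (auto simp: g_def fun_eq_iff algebra_simps case_prod_beta)
    then show "p = p'" using ind by (metis prod_eq_iff right_minus_eq)
  qed
  have wset: "{x\<in>C. hweight n x = s*q+t} = (\<lambda>(a,b). g a b) ` {(a,b). E a b}"
  proof (intro set_eqI iffI)
    fix x assume "x \<in> {x\<in>C. hweight n x = s*q+t}"
    then obtain a b where x: "x = g a b" "hweight n (g a b) = s*q+t" using Cg by auto
    have ab: "(a,b) \<noteq> (0,0)" using x pos by (auto simp: g_def hweight_def)
    then have "E a b" using W[OF ab] x by (simp split: if_splits)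
    then show "x \<in> (\<lambda>(a,b). g a b) ` {(a,b). E a b}" using x by auto
  next
    fix x assume "x \<in> (\<lambda>(a,b). g a b) ` {(a,b). E a b}"
    then obtain a b where x: "x = g a b" "E a b" by auto
    then have ab: "(a,b) \<noteq> (0,0)" by (auto simp: E_def)
    show "x \<in> {x\<in>C. hweight n x = s*q+t}" using W[OF ab] x Cg by auto
  qed
  have Eset: "{(a,b). E a b} = (\<lambda>(j,b). (- (b * e j), b)) ` ({..t} \<times> (UNIV - {0}))"
  proof (intro set_eqI iffI)
    fix p assume "p \<in> {(a,b). E a b}"
    then obtain a b j where p: "p = (a,b)" "b \<noteq> 0" "j \<le> t" "a + b * e j = 0"
      by (auto simp: E_def)
    then have "a = - (b * e j)" by (simp add: add_eq_0_iff2)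
    then show "p \<in> (\<lambda>(j,b). (- (b * e j), b)) ` ({..t} \<times> (UNIV - {0}))"
      using p by (intro image_eqI[of _ _ "(j,b)"]) auto
  next
    fix p assume "p \<in> (\<lambda>(j,b). (- (b * e j), b)) ` ({..t} \<times> (UNIV - {0::'a}))"
    then obtain j b where "p = (- (b * e j), b)" "j \<le> t" "b \<noteq> 0" by auto
    then show "p \<in> {(a,b). E a b}" by (auto simp: E_def)
  qed
  have injE: "inj_on (\<lambda>(j,b). (- (b * e j), b)) ({..t} \<times> (UNIV - {0::'a}))"
  proof (rule inj_onI)
    fix p p' assume p: "p \<in> {..t} \<times> (UNIV - {0::'a})" "p' \<in> {..t} \<times> (UNIV - {0::'a})"
      and eq: "(case p of (j,b) \<Rightarrow> (- (b * e j), b)) = (case p' of (j,b) \<Rightarrow> (- (b * e j), b))"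
    obtain j b j' b' where pp: "p = (j,b)" "p' = (j',b')" by fastforce
    have "b = b'" "b * e j = b * e j'" using eq pp by auto
    moreover have "b \<noteq> 0" "j < q" "j' < q" using p pp tq by auto
    ultimately have "e j = e j'" "b = b'" by auto
    then show "p = p'" using einj \<open>j < q\<close> \<open>j' < q\<close> pp by auto
  qed
  have "num_weight n C (s*q+t) = card {(a,b). E a b}"
    unfolding num_weight_def wset using injg by (simp add: card_image inj_on_subset)
  also have "\<dots> = card ({..t} \<times> (UNIV - {0::'a}))"
    unfolding Eset using injE by (simp add: card_image)
  also have "\<dots> = (t + 1) * (q - 1)"
    by (simp add: card_cartesian_product qd card_Diff_subset)
  finally have "num_weight n C (s*q+t) = (q - 1) * (t + 1)" by simp
  then show ?thesis using lc md by blast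
qed

theorem theorem3:
  fixes s t n q :: nat
  assumes "q = card (UNIV :: 'a set)"
    and "s + t > 0" and "t < q"
    and "n = s * (q + 1) + t + 1"
  shows "(\<exists>C :: (nat \<Rightarrow> 'a::{field,finite}) set. linear_code n 2 C \<and> has_min_dist n C (s * q + t)
            \<and> num_weight n C (s * q + t) = (q - 1) * (t + 1))
       \<and> (\<forall>(C :: (nat \<Rightarrow> 'a) set) d. linear_code n 2 C \<and> has_min_dist n C d \<longrightarrow> d \<le> s * q + t)
       \<and> (\<forall>C :: (nat \<Rightarrow> 'a) set. linear_code n 2 C \<and> has_min_dist n C (s * q + t)
            \<longrightarrow> (q - 1) * (t + 1) \<le> num_weight n C (s * q + t))"
  using construction[OF assms] gen_bounds[OF _ _ assms(1) assms(4)] by blast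

end
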